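(* Let $\chi\in\chi(G)$ be a character, $\lambda\in\Lambda^\chi$ and $x\in X$. The following are equivalent: (1) $x\in S^\chi_\lambda$; (2) the function $v\mapsto\langle\chi,v\rangle/\|v\|$ on $\sigma_x\setminus\{0\}$ attains a negative relative minimum at $\lambda$; (3) $L(S_x)\subset S^\chi_\lambda$.
   Context: $G$ diagonalizable over $\mathbf C$ acting on $X=\mathbf A^n_{\mathbf C}$ by $g\cdot x=(\chi_1(g)x_1,\dots,\chi_n(g)x_n)$. $\chi(G)$ characters, $\Gamma(G)$ one-parameter subgroups, pairing $\chi(\lambda(t))=t^{\langle\chi,\lambda\rangle}$ extended to $\mathbf R$; fixed norm $\|\cdot\|$ on $\Gamma(G)$ from an inner product on $\Gamma(G)_{\mathbf R}$ integral on $\Gamma(G)$. $[n]=\{1,\dots,n\}$; $S_x=\{i:x_i\ne0\}$; $\sigma_x=\{v\in\Gamma(G)_{\mathbf R}:\langle\chi_i,v\rangle\ge0\ \forall i\in S_x\}$ (its lattice points are the $\lambda$ with $\lim_{t\to0}\lambda(t)x$ existing). $x$ is $\chi$-unstable if some $\lambda$ with existing limit has $\langle\chi,\lambda\rangle<0$; for unstable $x$, $\lambda_{\chi,x}$ is the unique indivisible one-parameter subgroup with existing limit minimizing $\langle\chi,\lambda\rangle/\|\lambda\|$ among nonzero such. $\Lambda^\chi=\{\lambda_{\chi,x}\}$, $S^\chi_\lambda=\{x\text{ unstable}:\lambda_{\chi,x}=\lambda\}$. For $S\subset[n]$, $L(S)=\{x:x_i\ne0\iff i\in S\}$. *)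

theory Defs
  imports "HOL-Analysis.Analysis"
begin

text \<open>Model: \<Gamma>(G) = int^'r (so \<Gamma>(G)_R = real^'r); a character is represented by the
  integer linear functional it induces on \<Gamma>(G), i.e. a vector in int^'r.
  The action on X = complex^'n is given by the characters chis i, i in 'n.\<close>

definition ipair :: "int^'r::finite \<Rightarrow> int^'r \<Rightarrow> int" where
  "ipair c l = (\<Sum>j\<in>UNIV. c$j * l$j)"

definition pair :: "int^'r::finite \<Rightarrow> real^'r \<Rightarrow> real" where
  "pair c v = (\<Sum>j\<in>UNIV. of_int (c$j) * v$j)"

definition rvec :: "int^'r::finite \<Rightarrow> real^'r" where
  "rvec l = (\<chi> j. of_int (l$j))"

definition qform :: "int^'r::finite^'r \<Rightarrow> real^'r \<Rightarrow> real" where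
  "qform Q v = (\<Sum>i\<in>UNIV. \<Sum>j\<in>UNIV. v$i * of_int (Q$i$j) * v$j)"

definition integral_inner_product :: "int^'r::finite^'r \<Rightarrow> bool" where
  "integral_inner_product Q \<longleftrightarrow> (\<forall>i j. Q$i$j = Q$j$i) \<and> (\<forall>v. v \<noteq> 0 \<longrightarrow> 0 < qform Q v)"

definition qnorm :: "int^'r::finite^'r \<Rightarrow> real^'r \<Rightarrow> real" where
  "qnorm Q v = sqrt (qform Q v)"

definition ops_act :: "('n::finite \<Rightarrow> int^'r::finite) \<Rightarrow> int^'r \<Rightarrow> complex \<Rightarrow> complex^'n \<Rightarrow> complex^'n" where
  "ops_act chis l t x = (\<chi> i. t powi (ipair (chis i) l) * x$i)"

definition has_limit :: "('n::finite \<Rightarrow> int^'r::finite) \<Rightarrow> int^'r \<Rightarrow> complex^'n \<Rightarrow> bool" where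
  "has_limit chis l x \<longleftrightarrow> (\<exists>y. ((\<lambda>t. ops_act chis l t x) \<longlongrightarrow> y) (at 0))"

definition supp :: "complex^'n::finite \<Rightarrow> 'n set" where
  "supp x = {i. x$i \<noteq> 0}"

definition sigma :: "('n::finite \<Rightarrow> int^'r::finite) \<Rightarrow> complex^'n \<Rightarrow> (real^'r) set" where
  "sigma chis x = {v. \<forall>i\<in>supp x. 0 \<le> pair (chis i) v}"

definition Lstr :: "'n::finite set \<Rightarrow> (complex^'n) set" where
  "Lstr S = {x. supp x = S}"

definition indivisible :: "int^'r::finite \<Rightarrow> bool" where
  "indivisible l \<longleftrightarrow> l \<noteq> 0 \<and> (\<forall>k m. l = k *s m \<longrightarrow> k = 1 \<or> k = -1)"

definition unstable :: "('n::finite \<Rightarrow> int^'r::finite) \<Rightarrow> int^'r \<Rightarrow> complex^'n \<Rightarrow> bool" where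
  "unstable chis c x \<longleftrightarrow> (\<exists>l. has_limit chis l x \<and> ipair c l < 0)"

definition ratio :: "int^'r::finite^'r \<Rightarrow> int^'r \<Rightarrow> real^'r \<Rightarrow> real" where
  "ratio Q c v = pair c v / qnorm Q v"

definition optimal :: "('n::finite \<Rightarrow> int^'r::finite) \<Rightarrow> int^'r^'r \<Rightarrow> int^'r \<Rightarrow> complex^'n \<Rightarrow> int^'r \<Rightarrow> bool" where
  "optimal chis Q c x l \<longleftrightarrow> indivisible l \<and> has_limit chis l x \<and>
     (\<forall>m. m \<noteq> 0 \<and> has_limit chis m x \<longrightarrow> ratio Q c (rvec l) \<le> ratio Q c (rvec m))"

definition lam :: "('n::finite \<Rightarrow> int^'r::finite) \<Rightarrow> int^'r^'r \<Rightarrow> int^'r \<Rightarrow> complex^'n \<Rightarrow> int^'r" where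
  "lam chis Q c x = (THE l. optimal chis Q c x l)"

definition Sstrat :: "('n::finite \<Rightarrow> int^'r::finite) \<Rightarrow> int^'r^'r \<Rightarrow> int^'r \<Rightarrow> int^'r \<Rightarrow> (complex^'n) set" where
  "Sstrat chis Q c l = {x. unstable chis c x \<and> lam chis Q c x = l}"

definition Lambda :: "('n::finite \<Rightarrow> int^'r::finite) \<Rightarrow> int^'r^'r \<Rightarrow> int^'r \<Rightarrow> (int^'r) set" where
  "Lambda chis Q c = {lam chis Q c x | x. unstable chis c x}"

definition neg_rel_min_at :: "(real^'r::finite \<Rightarrow> real) \<Rightarrow> (real^'r) set \<Rightarrow> real^'r \<Rightarrow> bool" where
  "neg_rel_min_at f D p \<longleftrightarrow> p \<in> D \<and> f p < 0 \<and>
     (\<exists>e>0. \<forall>v\<in>D. dist v p < e \<longrightarrow> f p \<le> f v)"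

end

theory Submission
  imports Defs
begin

definition bil :: "int^'r::finite^'r \<Rightarrow> real^'r \<Rightarrow> real^'r \<Rightarrow> real" where
  "bil Q u v = (\<Sum>i\<in>UNIV. \<Sum>j\<in>UNIV. u$i * of_int (Q$i$j) * v$j)"

lemma qform_bil: "qform Q v = bil Q v v"
  by (simp add: qform_def bil_def)

lemma bil_add1: "bil Q (u + u') v = bil Q u v + bil Q u' v"
  by (simp add: bil_def algebra_simps sum.distrib)
lemma bil_add2: "bil Q u (v + v') = bil Q u v + bil Q u v'"
  by (simp add: bil_def algebra_simps sum.distrib)
lemma bil_diff1: "bil Q (u - u') v = bil Q u v - bil Q u' v"
  by (simp add: bil_def algebra_simps sum_subtractf)
lemma bil_diff2: "bil Q u (v - v') = bil Q u v - bil Q u v'"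
  by (simp add: bil_def algebra_simps sum_subtractf)
lemma bil_scale1: "bil Q (a *\<^sub>R u) v = a * bil Q u v"
  by (simp add: bil_def algebra_simps sum_distrib_left)
lemma bil_scale2: "bil Q u (a *\<^sub>R v) = a * bil Q u v"
  by (simp add: bil_def algebra_simps sum_distrib_left)
lemma bil_zero1[simp]: "bil Q 0 v = 0" by (simp add: bil_def)
lemma bil_zero2[simp]: "bil Q u 0 = 0" by (simp add: bil_def)

lemma bil_sym: assumes "integral_inner_product Q" shows "bil Q u v = bil Q v u"
proof -
  have s: "Q$i$j = Q$j$i" for i j using assms by (simp add: integral_inner_product_def)
  have "bil Q u v = (\<Sum>j\<in>UNIV. \<Sum>i\<in>UNIV. u$i * of_int (Q$i$j) * v$j)"
    unfolding bil_def by (rule sum.swap)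
  also have "\<dots> = bil Q v u" unfolding bil_def
    by (intro sum.cong refl) (simp add: s mult.commute mult.left_commute)
  finally show ?thesis .
qed

lemma bil_vec: "bil Q u v = (\<chi> j. \<Sum>i\<in>UNIV. u$i * of_int (Q$i$j)) \<bullet> v"
  unfolding bil_def inner_vec_def
  by (subst sum.swap) (simp add: sum_distrib_right)

lemma qform_pos: "integral_inner_product Q \<Longrightarrow> v \<noteq> 0 \<Longrightarrow> 0 < qform Q v"
  by (simp add: integral_inner_product_def)
lemma qform_zero[simp]: "qform Q 0 = 0" by (simp add: qform_def)
lemma qform_nonneg: "integral_inner_product Q \<Longrightarrow> 0 \<le> qform Q v"
  by (cases "v = 0") (auto dest: qform_pos[of Q v])
lemma qform_eq0: "integral_inner_product Q \<Longrightarrow> qform Q v = 0 \<longleftrightarrow> v = 0"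
  by (metis less_irrefl qform_pos qform_zero)
lemma qform_scale: "qform Q (a *\<^sub>R v) = a^2 * qform Q v"
  by (simp add: qform_bil bil_scale1 bil_scale2 power2_eq_square)
lemma qform_add: "integral_inner_product Q \<Longrightarrow> qform Q (u + v) = qform Q u + 2 * bil Q u v + qform Q v"
  by (simp add: qform_bil bil_add1 bil_add2 bil_sym[of Q v u])
lemma qform_diff: "integral_inner_product Q \<Longrightarrow> qform Q (u - v) = qform Q u - 2 * bil Q u v + qform Q v"
  by (simp add: qform_bil bil_diff1 bil_diff2 bil_sym[of Q v u])

lemma qnorm_pos: "integral_inner_product Q \<Longrightarrow> v \<noteq> 0 \<Longrightarrow> 0 < qnorm Q v"
  by (simp add: qnorm_def qform_pos)
lemma qnorm_scale: "qnorm Q (a *\<^sub>R v) = \<bar>a\<bar> * qnorm Q v"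
  by (simp add: qnorm_def qform_scale real_sqrt_mult)

lemma pair_inner: "pair c v = rvec c \<bullet> v"
  by (simp add: pair_def rvec_def inner_vec_def)
lemma pair_add: "pair c (u + v) = pair c u + pair c v"
  by (simp add: pair_inner inner_add_right)
lemma pair_diff: "pair c (u - v) = pair c u - pair c v"
  by (simp add: pair_inner inner_diff_right)
lemma pair_scale: "pair c (a *\<^sub>R v) = a * pair c v"
  by (simp add: pair_inner)
lemma pair_zero[simp]: "pair c 0 = 0"
  by (simp add: pair_inner)
lemma pair_rvec: "pair c (rvec l) = of_int (ipair c l)"
  by (simp add: pair_def rvec_def ipair_def)

lemma rvec_eq0: "rvec l = 0 \<longleftrightarrow> l = 0"
  by (simp add: rvec_def vec_eq_iff)
lemma rvec_scale: "rvec (k *s l) = of_int k *\<^sub>R rvec l"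
  by (simp add: rvec_def vec_eq_iff)

lemma ratio_scale: "0 < a \<Longrightarrow> ratio Q c (a *\<^sub>R v) = ratio Q c v"
  by (simp add: ratio_def pair_scale qnorm_scale)

lemma ratio_neg_iff: "integral_inner_product Q \<Longrightarrow> v \<noteq> 0 \<Longrightarrow> ratio Q c v < 0 \<longleftrightarrow> pair c v < 0"
  using qnorm_pos[of Q v] by (auto simp add: ratio_def divide_less_0_iff)

lemma sigma_convex: "u \<in> sigma chis x \<Longrightarrow> v \<in> sigma chis x \<Longrightarrow> 0 \<le> a \<Longrightarrow> 0 \<le> b \<Longrightarrow> a *\<^sub>R u + b *\<^sub>R v \<in> sigma chis x"
  by (simp add: sigma_def pair_add pair_scale)

lemma comp_limit:
  fixes a :: complex and k :: int
  shows "(\<exists>y. ((\<lambda>t. t powi k * a) \<longlongrightarrow> y) (at 0)) \<longleftrightarrow> (a = 0 \<or> 0 \<le> k)"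
proof
  assume "\<exists>y. ((\<lambda>t. t powi k * a) \<longlongrightarrow> y) (at 0)"
  then obtain y where y: "((\<lambda>t. t powi k * a) \<longlongrightarrow> y) (at 0)" by blast
  show "a = 0 \<or> 0 \<le> k"
  proof (rule ccontr)
    assume "\<not> (a = 0 \<or> 0 \<le> k)"
    hence a: "a \<noteq> 0" and k: "k < 0" by auto
    define n where "n = nat (- k)"
    have "((\<lambda>t. t ^ n * (t powi k * a)) \<longlongrightarrow> 0 ^ n * y) (at 0)"
      by (intro tendsto_intros y)
    moreover have "0 ^ n = (0::complex)" using k by (simp add: n_def)
    moreover have "eventually (\<lambda>t. t ^ n * (t powi k * a) = a) (at (0::complex))"
    proof -
      have "eventually (\<lambda>t. t \<noteq> (0::complex)) (at 0)" by (simp add: eventually_at_filter)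
      then show ?thesis
      proof (rule eventually_mono)
        fix t :: complex assume "t \<noteq> 0"
        have "t powi k = inverse t ^ n" using k by (simp add: power_int_def n_def)
        then show "t ^ n * (t powi k * a) = a" using \<open>t \<noteq> 0\<close>
          by (simp add: power_inverse field_simps)
      qed
    qed
    ultimately have "((\<lambda>t. a) \<longlongrightarrow> 0) (at (0::complex))"
      using tendsto_cong[of "\<lambda>t. t ^ n * (t powi k * a)" "\<lambda>t. a" "at (0::complex)" 0] by simp
    hence "a = 0" by (simp add: tendsto_const_iff)
    with a show False by simp
  qed
next
  assume h: "a = 0 \<or> 0 \<le> k"
  show "\<exists>y. ((\<lambda>t. t powi k * a) \<longlongrightarrow> y) (at 0)"
  proof (cases "a = 0")
    case True then show ?thesis by auto
  next
    case False
    hence k: "0 \<le> k" using h by auto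
    have "((\<lambda>t. t ^ nat k * a) \<longlongrightarrow> 0 ^ nat k * a) (at (0::complex))"
      by (intro tendsto_intros)
    moreover have "(\<lambda>t::complex. t powi k * a) = (\<lambda>t. t ^ nat k * a)"
      using k by (simp add: power_int_def)
    ultimately show ?thesis by auto
  qed
qed

lemma has_limit_iff: "has_limit chis l x \<longleftrightarrow> rvec l \<in> sigma chis x"
proof -
  have "has_limit chis l x \<longleftrightarrow> (\<forall>i. \<exists>y. ((\<lambda>t. t powi (ipair (chis i) l) * x$i) \<longlongrightarrow> y) (at 0))"
  proof
    assume "has_limit chis l x"
    then obtain y where y: "((\<lambda>t. ops_act chis l t x) \<longlongrightarrow> y) (at 0)" by (auto simp: has_limit_def)
    show "\<forall>i. \<exists>y. ((\<lambda>t. t powi (ipair (chis i) l) * x$i) \<longlongrightarrow> y) (at 0)"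
    proof
      fix i
      from tendsto_vec_nth[OF y, of i] show "\<exists>y. ((\<lambda>t. t powi (ipair (chis i) l) * x$i) \<longlongrightarrow> y) (at 0)"
        by (auto simp: ops_act_def)
    qed
  next
    assume "\<forall>i. \<exists>y. ((\<lambda>t. t powi (ipair (chis i) l) * x$i) \<longlongrightarrow> y) (at 0)"
    then obtain y where y: "\<And>i. ((\<lambda>t. t powi (ipair (chis i) l) * x$i) \<longlongrightarrow> y i) (at 0)" by metis
    have "((\<lambda>t. ops_act chis l t x) \<longlongrightarrow> (\<chi> i. y i)) (at 0)"
      unfolding ops_act_def by (intro tendsto_vec_lambda y)
    then show "has_limit chis l x" by (auto simp: has_limit_def)
  qed
  also have "\<dots> \<longleftrightarrow> (\<forall>i. x$i = 0 \<or> 0 \<le> ipair (chis i) l)" by (simp add: comp_limit)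
  also have "\<dots> \<longleftrightarrow> rvec l \<in> sigma chis x"
    by (auto simp: sigma_def supp_def pair_rvec)
  finally show ?thesis .
qed

lemma sigma_supp: "supp y = supp x \<Longrightarrow> sigma chis y = sigma chis x"
  unfolding sigma_def by simp

lemma optimal_supp: "supp y = supp x \<Longrightarrow> optimal chis Q c y = optimal chis Q c x"
  unfolding optimal_def has_limit_iff using sigma_supp[of y x chis] by simp
lemma unstable_supp: "supp y = supp x \<Longrightarrow> unstable chis c y = unstable chis c x"
  unfolding unstable_def has_limit_iff using sigma_supp[of y x chis] by simp
lemma lam_supp: "supp y = supp x \<Longrightarrow> lam chis Q c y = lam chis Q c x"
  unfolding lam_def using optimal_supp[of y x chis Q c] by simp

lemma divides_all_indiv:
  fixes l :: "int^'r::finite"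
  assumes "indivisible l" "0 < a" "\<forall>j. a dvd l$j"
  shows "a = 1"
proof -
  have "l = a *s (\<chi> j. l$j div a)"
    using assms(3) by (simp add: vec_eq_iff)
  then show ?thesis using assms(1,2) unfolding indivisible_def by force
qed

lemma indiv_eq:
  fixes l1 l2 :: "int^'r::finite"
  assumes i1: "indivisible l1" and i2: "indivisible l2" and a: "0 < a" and b: "0 < b"
    and e: "a *s l1 = b *s l2"
  shows "l1 = l2"
proof -
  have g: "gcd a b \<noteq> 0" using a by simp
  obtain a' b' where ab: "a = a' * gcd a b" "b = b' * gcd a b" and cop: "coprime a' b'"
    using gcd_coprime_exists[OF g] by blast
  have gp: "0 < gcd a b" using g by (simp add: order_le_neq_trans)
  have a': "0 < a'" using a gp ab(1) by (metis zero_less_mult_iff not_less_iff_gr_or_eq)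
  have b': "0 < b'" using b gp ab(2) by (metis zero_less_mult_iff not_less_iff_gr_or_eq)
  have e': "a' * l1$j = b' * l2$j" for j
  proof -
    have "a * l1$j = b * l2$j" using e by (simp add: vec_eq_iff)
    then have "gcd a b * (a' * l1$j) = gcd a b * (b' * l2$j)"
      by (subst (asm) ab(1), subst (asm) ab(2)) (simp add: algebra_simps)
    then show ?thesis using gp a by auto
  qed
  have "a' dvd l2$j" for j
  proof -
    have "a' dvd b' * l2$j" using e'[of j] by (metis dvd_triv_left)
    then show ?thesis using cop coprime_dvd_mult_right_iff by blast
  qed
  then have "a' = 1" using divides_all_indiv[OF i2 a'] by blast
  have "b' dvd l1$j" for j
  proof -
    have "b' dvd a' * l1$j" using e'[of j] by (metis dvd_triv_left)
    then show ?thesis using cop coprime_dvd_mult_right_iff coprime_commute by blast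
  qed
  then have "b' = 1" using divides_all_indiv[OF i1 b'] by blast
  show ?thesis using e' \<open>a' = 1\<close> \<open>b' = 1\<close> by (simp add: vec_eq_iff)
qed

lemma indiv_decomp:
  fixes z :: "int^'r::finite"
  shows "z \<noteq> 0 \<Longrightarrow> \<exists>k l. 0 < k \<and> indivisible l \<and> z = k *s l"
proof (induction z rule: measure_induct_rule[where f = "\<lambda>z. \<Sum>j\<in>UNIV. nat \<bar>z$j\<bar>"])
  case (less z)
  show ?case
  proof (cases "indivisible z")
    case True then show ?thesis by (rule_tac x=1 in exI, rule_tac x=z in exI) simp
  next
    case False
    then obtain k m where zk: "z = k *s m" and k1: "k \<noteq> 1" "k \<noteq> -1"
      using less.prems unfolding indivisible_def by blast
    have k0: "k \<noteq> 0" using zk less.prems by auto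
    define m' where "m' = sgn k *s m"
    have zk': "z = \<bar>k\<bar> *s m'" using zk k0 by (simp add: m'_def vec_eq_iff abs_sgn)
    have kk: "2 \<le> \<bar>k\<bar>" using k0 k1 by auto
    have m0: "m' \<noteq> 0" using zk' less.prems by auto
    then obtain j0 where j0: "m'$j0 \<noteq> 0" by (auto simp: vec_eq_iff)
    have le: "nat \<bar>m'$j\<bar> \<le> nat \<bar>z$j\<bar>" for j
    proof -
      have "\<bar>m'$j\<bar> \<le> \<bar>k\<bar> * \<bar>m'$j\<bar>" using kk by (simp add: mult_le_cancel_right1)
      then show ?thesis by (simp add: zk' abs_mult)
    qed
    have lt: "nat \<bar>m'$j0\<bar> < nat \<bar>z$j0\<bar>"
      using kk j0 by (simp add: zk' abs_mult)
    have "(\<Sum>j\<in>UNIV. nat \<bar>m'$j\<bar>) < (\<Sum>j\<in>UNIV. nat \<bar>z$j\<bar>)"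
      by (rule sum_strict_mono_ex1) (use le lt in auto)
    from less.IH[OF this m0] obtain k2 l where "0 < k2" "indivisible l" "m' = k2 *s l" by blast
    then show ?thesis using kk zk'
      by (rule_tac x="\<bar>k\<bar> * k2" in exI, rule_tac x=l in exI) (simp add: vec_eq_iff)
  qed
qed

lemma cont_nth[continuous_intros]: "continuous_on S (\<lambda>v::real^'r::finite. v $ i)"
  by (rule linear_continuous_on[OF bounded_linear_vec_nth])

lemma cont_pair: "continuous_on S (\<lambda>v. pair c v)"
  unfolding pair_def by (intro continuous_intros)

lemma cont_qnorm: "continuous_on S (\<lambda>v. qnorm Q v)"
  unfolding qnorm_def qform_def by (intro continuous_intros)

lemma closed_sigma: "closed (sigma chis x)"
proof -
  have "sigma chis x = (\<Inter>i\<in>supp x. {v. 0 \<le> pair (chis i) v})"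
    by (auto simp: sigma_def)
  also have "closed \<dots>"
    by (intro closed_INT ballI closed_Collect_le continuous_intros cont_pair)
  finally show ?thesis .
qed

lemma real_min:
  assumes Q: "integral_inner_product Q" and u: "unstable chis c x"
  shows "\<exists>p. p \<in> sigma chis x \<and> p \<noteq> 0 \<and> ratio Q c p < 0 \<and>
     (\<forall>v \<in> sigma chis x - {0}. ratio Q c p \<le> ratio Q c v)"
proof -
  obtain l0 where l0: "has_limit chis l0 x" "ipair c l0 < 0" using u unfolding unstable_def by blast
  define v0 where "v0 = rvec l0"
  have v0C: "v0 \<in> sigma chis x" using l0 by (simp add: has_limit_iff v0_def)
  have v00: "v0 \<noteq> 0" using l0(2) by (auto simp: v0_def rvec_eq0 ipair_def)
  have rv0: "ratio Q c v0 < 0" using l0(2) v00 ratio_neg_iff[OF Q v00] by (simp add: v0_def pair_rvec)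
  define S where "S = sigma chis x \<inter> sphere 0 1"
  have cS: "compact S" unfolding S_def by (intro closed_Int_compact closed_sigma compact_sphere)
  have nrm: "(1 / norm v) *\<^sub>R v \<in> S" if "v \<in> sigma chis x" "v \<noteq> 0" for v
    using that unfolding S_def by (auto simp: sigma_def pair_scale)
  have rnrm: "ratio Q c ((1 / norm v) *\<^sub>R v) = ratio Q c v" if "v \<noteq> 0" for v
    using that by (intro ratio_scale) simp
  have ne: "S \<noteq> {}" using nrm[OF v0C v00] by blast
  have S0: "\<And>v. v \<in> S \<Longrightarrow> qnorm Q v \<noteq> 0" unfolding S_def using qnorm_pos[OF Q] by (metis IntD2 less_irrefl mem_sphere_0 norm_zero zero_neq_one)
  have cont: "continuous_on S (ratio Q c)"
    unfolding ratio_def[abs_def] using S0 by (intro continuous_on_divide cont_pair cont_qnorm) auto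
  obtain p where p: "p \<in> S" "\<forall>y\<in>S. ratio Q c p \<le> ratio Q c y"
    using continuous_attains_inf[OF cS ne cont] by blast
  have all: "\<forall>v \<in> sigma chis x - {0}. ratio Q c p \<le> ratio Q c v"
    using p nrm rnrm by (metis DiffE insertCI)
  have "ratio Q c p < 0" using all v0C v00 rv0 by (meson DiffI le_less_trans singletonD)
  moreover have "p \<in> sigma chis x" "p \<noteq> 0" using p(1) unfolding S_def by auto
  ultimately show ?thesis using all by blast
qed

lemma rat_functional:
  "\<exists>g::real \<Rightarrow> rat. (\<forall>x y. g (x + y) = g x + g y) \<and> (\<forall>q x. g (of_rat q * x) = q * g x) \<and> g 1 = 1"
proof -
  interpret vs1: vector_space "\<lambda>q::rat. \<lambda>x::real. of_rat q * x"
    by unfold_locales (auto simp: algebra_simps of_rat_add of_rat_mult)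
  interpret vs2: vector_space "(*) :: rat \<Rightarrow> rat \<Rightarrow> rat"
    by unfold_locales (auto simp: algebra_simps)
  interpret vector_space_pair "\<lambda>q::rat. \<lambda>x::real. of_rat q * x" "(*) :: rat \<Rightarrow> rat \<Rightarrow> rat" ..
  have "vs1.independent {1::real}"
    by (simp add: vs1.independent_insert vs1.span_empty)
  from linear_independent_extend[OF this, of "\<lambda>_. 1"]
  obtain g where g: "Vector_Spaces.linear (\<lambda>q::rat. \<lambda>x::real. of_rat q * x) (*) g" "g 1 = 1" by auto
  interpret lg: Vector_Spaces.linear "\<lambda>q::rat. \<lambda>x::real. of_rat q * x" "(*) :: rat \<Rightarrow> rat \<Rightarrow> rat" g by fact
  show ?thesis using g lg.add lg.scale by blast
qed

lemma pair_minus: "pair c (- v) = - pair c v"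
  by (simp add: pair_inner)

locale qfun =
  fixes g :: "real \<Rightarrow> rat"
  assumes add: "g (x + y) = g x + g y" and scale: "g (of_rat q * x) = q * g x" and one: "g 1 = 1"
begin
lemma zero[simp]: "g 0 = 0" using add[of 0 0] by simp
lemma sum: "g (sum f A) = (\<Sum>a\<in>A. g (f a))"
  by (induction A rule: infinite_finite_induct) (auto simp: add)
lemma int_mult: "g (of_int k * x) = of_int k * g x"
  using scale[of "of_int k" x] by simp
lemma mult_int: "g (x * of_int k) = g x * of_int k"
  using int_mult[of k x] by (simp add: mult.commute)
lemma minus_one: "g (-1) = -1"
  using scale[of "-1" 1] one by simp
lemma of_int': "g (of_int k) = of_int k"
  using int_mult[of k 1] one by simp
end

lemma int_min:
  assumes Q: "integral_inner_product Q" and pC: "p \<in> sigma chis x" and p0: "p \<noteq> 0"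
    and rp: "ratio Q c p < 0" and pmin: "\<forall>v \<in> sigma chis x - {0}. ratio Q c p \<le> ratio Q c v"
  shows "\<exists>z s. 0 < s \<and> rvec z = s *\<^sub>R p"
proof -
  have pcp: "pair c p < 0" using ratio_neg_iff[OF Q p0] rp by simp
  define pp where "pp = (-1 / pair c p) *\<^sub>R p"
  have pos: "0 < -1 / pair c p" using pcp by simp
  have cpp: "pair c pp = -1" using pcp unfolding pp_def pair_scale by simp
  have ppC: "pp \<in> sigma chis x" using pC pcp by (auto simp: pp_def sigma_def pair_scale pair_minus intro!: divide_nonneg_neg)
  have pp0: "pp \<noteq> 0" using cpp by auto
  have rpp: "ratio Q c pp = ratio Q c p" unfolding pp_def by (rule ratio_scale[OF pos])
  have qmin: "qform Q pp \<le> qform Q v" if "v \<in> sigma chis x" "pair c v = -1" for v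
  proof -
    have v0: "v \<noteq> 0" using that by auto
    have "ratio Q c pp \<le> ratio Q c v" using pmin rpp that v0 by auto
    then have "-1 / qnorm Q pp \<le> -1 / qnorm Q v" using that cpp by (simp add: ratio_def)
    then have "qnorm Q pp \<le> qnorm Q v" using qnorm_pos[OF Q pp0] qnorm_pos[OF Q v0]
      by (simp add: divide_simps)
    then show ?thesis by (simp add: qnorm_def)
  qed
  define T where "T = {i \<in> supp x. pair (chis i) pp = 0}"
  define U where "U = rvec ` (chis ` T \<union> {c})"
  have finU: "finite U" unfolding U_def by simp
  have orth: "bil Q pp d = 0" if hd: "\<forall>u\<in>U. u \<bullet> d = 0" for d
  proof (rule ccontr)
    define \<beta> where "\<beta> = bil Q pp d"
    define \<gamma> where "\<gamma> = qform Q d"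
    assume "bil Q pp d \<noteq> 0"
    hence b0: "\<beta> \<noteq> 0" by (simp add: \<beta>_def)
    have cd: "pair c d = 0" using hd by (simp add: U_def pair_inner)
    have Td: "pair (chis i) d = 0" if "i \<in> T" for i using hd that by (simp add: U_def pair_inner)
    have ev1: "eventually (\<lambda>e. \<forall>i\<in>supp x - T. 0 < pair (chis i) pp - e * \<beta> * pair (chis i) d) (at_right 0)"
    proof (rule eventually_ball_finite)
      show "finite (supp x - T)" by simp
      show "\<forall>i\<in>supp x - T. eventually (\<lambda>e. 0 < pair (chis i) pp - e * \<beta> * pair (chis i) d) (at_right 0)"
      proof
        fix i assume i: "i \<in> supp x - T"
        have "0 \<le> pair (chis i) pp" using ppC i by (auto simp: sigma_def)
        moreover have "pair (chis i) pp \<noteq> 0" using i by (auto simp: T_def)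
        ultimately have a: "0 < pair (chis i) pp" by simp
        have "((\<lambda>e. pair (chis i) pp - e * \<beta> * pair (chis i) d) \<longlongrightarrow> pair (chis i) pp - 0 * \<beta> * pair (chis i) d) (at_right 0)"
          by (intro tendsto_intros)
        then have "((\<lambda>e. pair (chis i) pp - e * \<beta> * pair (chis i) d) \<longlongrightarrow> pair (chis i) pp) (at_right 0)" by simp
        from order_tendstoD(1)[OF this a] show "eventually (\<lambda>e. 0 < pair (chis i) pp - e * \<beta> * pair (chis i) d) (at_right 0)" .
      qed
    qed
    have "((\<lambda>e. e * \<gamma>) \<longlongrightarrow> 0 * \<gamma>) (at_right (0::real))" by (intro tendsto_intros)
    then have ev2: "eventually (\<lambda>e. e * \<gamma> < 2) (at_right 0)"
      by (intro order_tendstoD(2)) auto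
    have ev3: "eventually (\<lambda>e. (0::real) < e) (at_right 0)" by (rule eventually_at_right_less)
    obtain e where e1: "\<forall>i\<in>supp x - T. 0 < pair (chis i) pp - e * \<beta> * pair (chis i) d"
      and e2: "e * \<gamma> < 2" and e3: "0 < e"
      using eventually_happens'[OF _ eventually_conj[OF ev1 eventually_conj[OF ev2 ev3]]] by auto
    define pt where "pt = pp + (- e * \<beta>) *\<^sub>R d"
    have ptp: "pair a pt = pair a pp - e * \<beta> * pair a d" for a
      unfolding pt_def pair_add pair_scale by simp
    have "pt \<in> sigma chis x"
    proof (unfold sigma_def, intro CollectI ballI)
      fix i assume i: "i \<in> supp x"
      show "0 \<le> pair (chis i) pt"
      proof (cases "i \<in> T")
        case True then show ?thesis by (simp add: ptp Td T_def)
      next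
        case False then have "0 < pair (chis i) pp - e * \<beta> * pair (chis i) d" using e1 i by blast
        then show ?thesis using ptp[of "chis i"] by linarith
      qed
    qed
    moreover have "pair c pt = -1" using cpp cd by (simp add: ptp)
    ultimately have "qform Q pp \<le> qform Q pt" by (rule qmin)
    moreover have "qform Q pt = qform Q pp - e * \<beta>^2 * (2 - e * \<gamma>)"
      unfolding pt_def qform_add[OF Q] bil_scale2 qform_scale \<beta>_def[symmetric] \<gamma>_def[symmetric]
      by (simp add: algebra_simps power2_eq_square)
    moreover have "0 < e * \<beta>^2 * (2 - e * \<gamma>)" using e2 e3 b0 by simp
    ultimately show False by simp
  qed
  define w where "w = (\<chi> j. \<Sum>i\<in>UNIV. pp$i * of_int (Q$i$j))"
  have wd: "bil Q pp d = w \<bullet> d" for d unfolding w_def by (rule bil_vec)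
  have "w \<in> orthogonal_comp (orthogonal_comp (span U))"
  proof -
    have "orthogonal y w" if y: "y \<in> orthogonal_comp (span U)" for y
    proof -
      have "\<forall>u\<in>U. u \<bullet> y = 0" using y span_superset[of U] by (auto simp: orthogonal_comp_def orthogonal_def)
      then have "w \<bullet> y = 0" using orth wd by metis
      then show ?thesis by (simp add: orthogonal_def inner_commute)
    qed
    then show ?thesis by (simp add: orthogonal_comp_def)
  qed
  then have "w \<in> span U" using orthogonal_comp_self[OF subspace_span] by blast
  then obtain \<mu> where wmu: "w = (\<Sum>u\<in>U. \<mu> u *\<^sub>R u)" using span_finite[OF finU] by auto
  obtain g where "qfun g" using rat_functional unfolding qfun_def by blast
  interpret qfun g by fact
  define r where "r j = g (pp$j)" for j
  define v' where "v' = (\<chi> j. (of_rat (r j) :: real))"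
  have pair_v': "pair a v' = of_rat (g (pair a pp))" for a
    by (simp add: pair_def v'_def r_def sum int_mult of_rat_sum of_rat_mult)
  have Uint: "\<exists>z. u = rvec z" if "u \<in> U" for u using that by (auto simp: U_def)
  define w' where "w' = (\<chi> j. \<Sum>i\<in>UNIV. v'$i * of_int (Q$i$j))"
  have w'eq: "w' = (\<Sum>u\<in>U. of_rat (g (\<mu> u)) *\<^sub>R u)"
  proof -
    have "w'$j = (\<Sum>u\<in>U. of_rat (g (\<mu> u)) * u$j)" for j
    proof -
      have "w'$j = of_rat (g (w$j))"
        by (simp add: w'_def w_def v'_def r_def sum mult_int of_rat_sum of_rat_mult)
      also have "w$j = (\<Sum>u\<in>U. \<mu> u * u$j)" by (simp add: wmu)
      also have "g \<dots> = (\<Sum>u\<in>U. g (\<mu> u * u$j))" by (rule sum)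
      also have "\<dots> = (\<Sum>u\<in>U. g (\<mu> u) * rat_of_int (\<some>k. u$j = of_int k))"
      proof (rule sum.cong[OF refl])
        fix u assume uU: "u \<in> U"
        obtain z where "u = rvec z" using Uint[OF uU] by blast
        then have uj: "u$j = of_int (z$j)" by (simp add: rvec_def)
        then have "(\<some>k. u$j = of_int k) = z$j" by simp
        then show "g (\<mu> u * u$j) = g (\<mu> u) * rat_of_int (\<some>k. u$j = of_int k)"
          by (simp add: uj mult_int)
      qed
      also have "of_rat \<dots> = (\<Sum>u\<in>U. of_rat (g (\<mu> u)) * u$j)"
      proof -
        have "of_rat (rat_of_int (\<some>k. u$j = of_int k)) = u$j" if uU: "u \<in> U" for u
        proof -
          obtain z where "u = rvec z" using Uint[OF uU] by blast
          then have uj: "u$j = of_int (z$j)" by (simp add: rvec_def)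
          then show ?thesis by simp
        qed
        then show ?thesis by (simp add: of_rat_sum of_rat_mult)
      qed
      finally show ?thesis .
    qed
    then show ?thesis by (simp add: vec_eq_iff sum_component)
  qed
  have orth': "bil Q v' d = 0" if hd: "\<forall>u\<in>U. u \<bullet> d = 0" for d
  proof -
    have "bil Q v' d = w' \<bullet> d" unfolding w'_def by (rule bil_vec)
    also have "\<dots> = (\<Sum>u\<in>U. of_rat (g (\<mu> u)) * (u \<bullet> d))"
      by (simp add: w'eq inner_sum_left)
    also have "\<dots> = 0" using hd by simp
    finally show ?thesis .
  qed
  define \<delta> where "\<delta> = v' - pp"
  have hd: "\<forall>u\<in>U. u \<bullet> \<delta> = 0"
  proof
    fix u assume "u \<in> U"
    then consider i where "i \<in> T" "u = rvec (chis i)" | "u = rvec c" by (auto simp: U_def)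
    then show "u \<bullet> \<delta> = 0"
    proof cases
      case 1 then show ?thesis
        by (simp add: \<delta>_def inner_diff_right pair_inner[symmetric] pair_v' T_def)
    next
      case 2 then show ?thesis
        by (simp add: \<delta>_def inner_diff_right pair_inner[symmetric] pair_v' cpp minus_one)
    qed
  qed
  have "bil Q \<delta> \<delta> = 0"
    using orth[OF hd] orth'[OF hd] by (simp add: \<delta>_def bil_diff1)
  then have "\<delta> = 0" using qform_eq0[OF Q] by (simp add: qform_bil)
  then have ppv: "pp = v'" by (simp add: \<delta>_def)
  define nn where "nn j = fst (quotient_of (r j))" for j
  define dd where "dd j = snd (quotient_of (r j))" for j
  have ddpos: "0 < dd j" for j unfolding dd_def by (rule quotient_of_denom_pos')
  have rj: "r j = of_int (nn j) / of_int (dd j)" for j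
    unfolding nn_def dd_def by (rule quotient_of_div) simp
  define DD where "DD = (\<Prod>j\<in>UNIV. dd j)"
  have DDpos: "0 < DD" unfolding DD_def using ddpos by (simp add: prod_pos)
  define z where "z = (\<chi> j. nn j * (\<Prod>k\<in>UNIV - {j}. dd k))"
  have "rvec z = of_int DD *\<^sub>R v'"
  proof -
    have "of_int (z$j) = of_int DD * (of_rat (r j) :: real)" for j
    proof -
      have "DD = dd j * (\<Prod>k\<in>UNIV - {j}. dd k)" unfolding DD_def
        by (simp add: prod.remove)
      then show ?thesis using ddpos[of j]
        by (simp add: z_def rj of_rat_divide field_simps)
    qed
    then show ?thesis by (simp add: rvec_def v'_def vec_eq_iff)
  qed
  also have "\<dots> = (of_int DD * (-1 / pair c p)) *\<^sub>R p" by (simp add: ppv[symmetric] pp_def)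
  finally have "rvec z = (of_int DD * (-1 / pair c p)) *\<^sub>R p" .
  moreover have "0 < of_int DD * (-1 / pair c p)" using DDpos pos by (intro mult_pos_pos) simp_all
  ultimately show ?thesis by blast
qed

lemma qform_less_from_ratio:
  assumes Q: "integral_inner_product Q" and u0: "u \<noteq> 0" and v0: "v \<noteq> 0"
    and pc: "pair c u = pair c v" "pair c v < 0"
  shows "ratio Q c u \<le> ratio Q c v \<longleftrightarrow> qform Q u \<le> qform Q v"
proof -
  have a: "0 < qnorm Q u" "0 < qnorm Q v" using qnorm_pos[OF Q] u0 v0 by auto
  have "ratio Q c u \<le> ratio Q c v \<longleftrightarrow> pair c v / qnorm Q u \<le> pair c v / qnorm Q v"
    using pc by (simp add: ratio_def)
  also have "\<dots> \<longleftrightarrow> qnorm Q u \<le> qnorm Q v"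
    using a pc(2) by (simp add: divide_simps mult.commute)
  also have "\<dots> \<longleftrightarrow> qform Q u \<le> qform Q v" by (simp add: qnorm_def)
  finally show ?thesis .
qed

lemma local_to_global:
  assumes Q: "integral_inner_product Q"
    and h: "neg_rel_min_at (ratio Q c) (sigma chis x - {0}) p"
  shows "\<forall>v\<in>sigma chis x - {0}. ratio Q c p \<le> ratio Q c v"
proof (rule ccontr)
  from h obtain e where pC: "p \<in> sigma chis x" "p \<noteq> 0" and rp: "ratio Q c p < 0" and e: "e > 0"
    and loc: "\<forall>v\<in>sigma chis x - {0}. dist v p < e \<longrightarrow> ratio Q c p \<le> ratio Q c v"
    unfolding neg_rel_min_at_def by blast
  assume "\<not> (\<forall>v\<in>sigma chis x - {0}. ratio Q c p \<le> ratio Q c v)"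
  then obtain v where vC: "v \<in> sigma chis x" "v \<noteq> 0" and rv: "ratio Q c v < ratio Q c p" by force
  have pcp: "pair c p < 0" using ratio_neg_iff[OF Q pC(2)] rp by simp
  have pcv: "pair c v < 0" using ratio_neg_iff[OF Q vC(2), of c] rv rp by linarith
  define s where "s = pair c p / pair c v"
  have s: "0 < s" using pcp pcv by (simp add: s_def divide_neg_neg)
  define v' where "v' = s *\<^sub>R v"
  have v'C: "v' \<in> sigma chis x" using vC s by (auto simp: v'_def sigma_def pair_scale)
  have v'0: "v' \<noteq> 0" using s vC by (simp add: v'_def)
  have cv': "pair c v' = pair c p" using pcv by (simp add: v'_def s_def pair_scale)
  have rv': "ratio Q c v' = ratio Q c v" unfolding v'_def by (rule ratio_scale[OF s])
  have qv': "qform Q v' < qform Q p"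
    using qform_less_from_ratio[OF Q pC(2) v'0, of c] cv' pcp rv rv' by simp
  define E where "E = e / (2 * (norm (v' - p) + 1))"
  define t where "t = min 1 E"
  have Epos: "0 < E" unfolding E_def using e by (intro divide_pos_pos) (auto intro: add_nonneg_pos)
  then have t0: "0 < t" and t1: "t \<le> 1" and tE: "t \<le> E" by (auto simp: t_def)
  have tn: "t * norm (v' - p) < e"
  proof -
    have "t * norm (v' - p) \<le> E * norm (v' - p)" using tE by (intro mult_right_mono) auto
    also have "\<dots> \<le> E * (norm (v' - p) + 1)" using Epos by simp
    also have "\<dots> = e / 2"
    proof -
      have g: "e / (2 * N) * N = e / 2" if "N \<noteq> 0" for N :: real using that by (simp add: field_simps)
      have "norm (v' - p) + 1 \<noteq> 0" by (metis add_nonneg_pos norm_ge_zero zero_less_one less_irrefl)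
      from g[OF this] show ?thesis unfolding E_def .
    qed
    finally show ?thesis using e by simp
  qed
  define w where "w = p + t *\<^sub>R (v' - p)"
  have w_eq: "w = (1 - t) *\<^sub>R p + t *\<^sub>R v'" by (simp add: w_def algebra_simps)
  have wC: "w \<in> sigma chis x" unfolding w_eq using t0 t1 pC v'C by (intro sigma_convex) auto
  have cw: "pair c w = pair c p" by (simp add: w_def pair_add pair_scale pair_diff cv')
  have w0: "w \<noteq> 0" using cw pcp by auto
  have dw: "dist w p < e" using tn t0 by (simp add: w_def dist_norm)
  have conv: "qform Q v' = qform Q p + 2 * bil Q p (v' - p) + qform Q (v' - p)"
    using qform_add[OF Q, of p "v' - p"] by simp
  have qw: "qform Q w = qform Q p + t * (qform Q v' - qform Q p) - t * (1 - t) * qform Q (v' - p)"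
    unfolding w_def qform_add[OF Q] bil_scale2 qform_scale using conv
    by (simp add: algebra_simps power2_eq_square)
  have "0 \<le> t * (1 - t) * qform Q (v' - p)" using t0 t1 qform_nonneg[OF Q] by simp
  moreover have "t * (qform Q v' - qform Q p) < 0" using t0 qv' by (simp add: mult_pos_neg)
  ultimately have "qform Q w < qform Q p" using qw by linarith
  then have "ratio Q c w < ratio Q c p"
    using qform_less_from_ratio[OF Q pC(2) w0, of c] cw pcp by simp
  moreover have "ratio Q c p \<le> ratio Q c w" using loc wC w0 dw by blast
  ultimately show False by simp
qed

lemma unique_min:
  assumes Q: "integral_inner_product Q"
    and i1: "indivisible l1" and i2: "indivisible l2"
    and C1: "rvec l1 \<in> sigma chis x" and C2: "rvec l2 \<in> sigma chis x"
    and r1: "ratio Q c (rvec l1) < 0" and r2: "ratio Q c (rvec l2) < 0"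
    and m1: "\<forall>v\<in>sigma chis x - {0}. ratio Q c (rvec l1) \<le> ratio Q c v"
    and m2: "\<forall>v\<in>sigma chis x - {0}. ratio Q c (rvec l2) \<le> ratio Q c v"
  shows "l1 = l2"
proof -
  have n1: "rvec l1 \<noteq> 0" and n2: "rvec l2 \<noteq> 0" using i1 i2 by (auto simp: indivisible_def rvec_eq0)
  define a1 where "a1 = - ipair c l1"
  define a2 where "a2 = - ipair c l2"
  have a1: "0 < a1" using ratio_neg_iff[OF Q n1] r1 by (simp add: a1_def pair_rvec)
  have a2: "0 < a2" using ratio_neg_iff[OF Q n2] r2 by (simp add: a2_def pair_rvec)
  define p1 where "p1 = (1 / of_int a1) *\<^sub>R rvec l1"
  define p2 where "p2 = (1 / of_int a2) *\<^sub>R rvec l2"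
  have c1: "pair c p1 = -1" using a1 unfolding p1_def pair_scale pair_rvec a1_def by simp
  have c2: "pair c p2 = -1" using a2 unfolding p2_def pair_scale pair_rvec a2_def by simp
  have rp1: "ratio Q c p1 = ratio Q c (rvec l1)" unfolding p1_def using a1 by (intro ratio_scale) simp
  have rp2: "ratio Q c p2 = ratio Q c (rvec l2)" unfolding p2_def using a2 by (intro ratio_scale) simp
  have p1C: "p1 \<in> sigma chis x" using C1 a1 by (auto simp: p1_def sigma_def pair_scale)
  have p2C: "p2 \<in> sigma chis x" using C2 a2 by (auto simp: p2_def sigma_def pair_scale)
  have p10: "p1 \<noteq> 0" using c1 by auto
  have p20: "p2 \<noteq> 0" using c2 by auto
  have mm1: "ratio Q c p1 \<le> ratio Q c v" if "v \<in> sigma chis x" "v \<noteq> 0" for v using m1 rp1 that by auto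
  have mm2: "ratio Q c p2 \<le> ratio Q c v" if "v \<in> sigma chis x" "v \<noteq> 0" for v using m2 rp2 that by auto
  have "qform Q p1 \<le> qform Q p2"
    using qform_less_from_ratio[OF Q p10 p20, of c] c1 c2 mm1[OF p2C p20] by simp
  moreover have "qform Q p2 \<le> qform Q p1"
    using qform_less_from_ratio[OF Q p20 p10, of c] c1 c2 mm2[OF p1C p10] by simp
  ultimately have eq: "qform Q p1 = qform Q p2" by simp
  define mid where "mid = (1/2) *\<^sub>R p1 + (1/2) *\<^sub>R p2"
  have midC: "mid \<in> sigma chis x" unfolding mid_def using p1C p2C by (intro sigma_convex) auto
  have cm: "pair c mid = -1" using c1 c2 by (simp add: mid_def pair_add pair_scale)
  have m0: "mid \<noteq> 0" using cm by auto
  have "qform Q p1 \<le> qform Q mid"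
    using qform_less_from_ratio[OF Q p10 m0, of c] c1 cm mm1[OF midC m0] by simp
  moreover have "qform Q mid = (qform Q p1 + qform Q p2) / 2 - qform Q (p1 - p2) / 4"
    unfolding mid_def qform_add[OF Q] qform_diff[OF Q] qform_scale bil_scale1 bil_scale2
    by (simp add: power2_eq_square field_simps)
  ultimately have "qform Q (p1 - p2) \<le> 0" using eq by simp
  then have "p1 = p2" using qform_nonneg[OF Q, of "p1 - p2"] qform_eq0[OF Q, of "p1 - p2"] by simp
  then have "of_int a2 *\<^sub>R rvec l1 = of_int a1 *\<^sub>R rvec l2"
    using a1 a2 by (simp add: p1_def p2_def vec_eq_iff field_simps)
  then have "rvec (a2 *s l1) = rvec (a1 *s l2)" by (simp add: rvec_scale)
  then have "a2 *s l1 = a1 *s l2" by (simp add: rvec_def vec_eq_iff) (metis of_int_eq_iff of_int_mult)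
  then show ?thesis using indiv_eq[OF i1 i2 a2 a1] by blast
qed

lemma exists_int_min:
  assumes Q: "integral_inner_product Q" and u: "unstable chis c x"
  shows "\<exists>l. indivisible l \<and> rvec l \<in> sigma chis x \<and> ratio Q c (rvec l) < 0 \<and>
     (\<forall>v \<in> sigma chis x - {0}. ratio Q c (rvec l) \<le> ratio Q c v)"
proof -
  obtain p where p: "p \<in> sigma chis x" "p \<noteq> 0" "ratio Q c p < 0"
    "\<forall>v \<in> sigma chis x - {0}. ratio Q c p \<le> ratio Q c v"
    using real_min[OF Q u] by blast
  obtain z s where zs: "0 < s" "rvec z = s *\<^sub>R p" using int_min[OF Q p] by blast
  have z0: "z \<noteq> 0" using zs p(2) rvec_eq0[of z] by auto
  obtain k l where kl: "0 < k" "indivisible l" "z = k *s l" using indiv_decomp[OF z0] by blast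
  have rl: "rvec l = (s / of_int k) *\<^sub>R p"
  proof -
    have "rvec z = of_int k *\<^sub>R rvec l" using kl(3) by (simp add: rvec_scale)
    then have "of_int k *\<^sub>R rvec l = s *\<^sub>R p" using zs by simp
    then have "(1 / of_int k) *\<^sub>R (of_int k *\<^sub>R rvec l) = (1 / of_int k) *\<^sub>R (s *\<^sub>R p)" by simp
    then show ?thesis using kl(1) by simp
  qed
  have sk: "0 < s / of_int k" using zs kl by simp
  have "rvec l \<in> sigma chis x" unfolding rl using p(1) sk by (auto simp: sigma_def pair_scale simp del: times_divide_eq_left)
  moreover have "ratio Q c (rvec l) = ratio Q c p" unfolding rl by (rule ratio_scale[OF sk])
  ultimately show ?thesis using kl(2) p by (intro exI[of _ l]) auto
qed

lemma optimal_realmin: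
  assumes Q: "integral_inner_product Q" and u: "unstable chis c x" and o: "optimal chis Q c x l"
  shows "indivisible l \<and> rvec l \<in> sigma chis x \<and> ratio Q c (rvec l) < 0 \<and>
     (\<forall>v \<in> sigma chis x - {0}. ratio Q c (rvec l) \<le> ratio Q c v)"
proof -
  obtain z where z: "indivisible z" "rvec z \<in> sigma chis x" "ratio Q c (rvec z) < 0"
     "\<forall>v \<in> sigma chis x - {0}. ratio Q c (rvec z) \<le> ratio Q c v"
    using exists_int_min[OF Q u] by blast
  have z0: "z \<noteq> 0" using z(1) by (simp add: indivisible_def)
  have "ratio Q c (rvec l) \<le> ratio Q c (rvec z)"
    using o z0 z(2) by (simp add: optimal_def has_limit_iff)
  moreover have "indivisible l" "rvec l \<in> sigma chis x" using o by (auto simp: optimal_def has_limit_iff)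
  ultimately show ?thesis using z by force
qed

lemma optimal_exists:
  assumes Q: "integral_inner_product Q" and u: "unstable chis c x"
  shows "\<exists>l. optimal chis Q c x l"
proof -
  obtain z where z: "indivisible z" "rvec z \<in> sigma chis x" "ratio Q c (rvec z) < 0"
     "\<forall>v \<in> sigma chis x - {0}. ratio Q c (rvec z) \<le> ratio Q c v"
    using exists_int_min[OF Q u] by blast
  have "optimal chis Q c x z"
    unfolding optimal_def has_limit_iff using z by (auto simp: rvec_eq0)
  then show ?thesis by blast
qed

lemma optimal_unique:
  assumes Q: "integral_inner_product Q" and u: "unstable chis c x"
    and o1: "optimal chis Q c x l1" and o2: "optimal chis Q c x l2"
  shows "l1 = l2"
  using optimal_realmin[OF Q u o1] optimal_realmin[OF Q u o2] unique_min[OF Q] by blast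

lemma lam_optimal:
  assumes Q: "integral_inner_product Q" and u: "unstable chis c x"
  shows "optimal chis Q c x (lam chis Q c x)"
  unfolding lam_def
  by (rule theI') (use optimal_exists[OF Q u] optimal_unique[OF Q u] in blast)

lemma lam_eq:
  assumes Q: "integral_inner_product Q" and u: "unstable chis c x" and o: "optimal chis Q c x l"
  shows "lam chis Q c x = l"
  using optimal_unique[OF Q u lam_optimal[OF Q u] o] .

theorem proposition3p13:
  fixes chis :: "'n::finite \<Rightarrow> int^'r::finite"
    and Q :: "int^'r^'r" and c l :: "int^'r" and x :: "complex^'n"
  assumes "integral_inner_product Q"
    and "l \<in> Lambda chis Q c"
  shows "(x \<in> Sstrat chis Q c l \<longleftrightarrow> neg_rel_min_at (ratio Q c) (sigma chis x - {0}) (rvec l))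
       \<and> (x \<in> Sstrat chis Q c l \<longleftrightarrow> Lstr (supp x) \<subseteq> Sstrat chis Q c l)"
proof -
  note Q = assms(1)
  obtain x0 where x0: "unstable chis c x0" "l = lam chis Q c x0"
    using assms(2) unfolding Lambda_def by blast
  have il: "indivisible l" using lam_optimal[OF Q x0(1)] x0(2) by (simp add: optimal_def)
  have part1: "x \<in> Sstrat chis Q c l \<longleftrightarrow> neg_rel_min_at (ratio Q c) (sigma chis x - {0}) (rvec l)"
  proof
    assume "x \<in> Sstrat chis Q c l"
    then have u: "unstable chis c x" and lx: "lam chis Q c x = l" by (auto simp: Sstrat_def)
    have o: "optimal chis Q c x l" using lam_optimal[OF Q u] lx by simp
    from optimal_realmin[OF Q u o] show "neg_rel_min_at (ratio Q c) (sigma chis x - {0}) (rvec l)"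
      unfolding neg_rel_min_at_def using il
      by (auto simp: rvec_eq0 indivisible_def intro!: exI[of _ 1])
  next
    assume h: "neg_rel_min_at (ratio Q c) (sigma chis x - {0}) (rvec l)"
    have glob: "\<forall>v\<in>sigma chis x - {0}. ratio Q c (rvec l) \<le> ratio Q c v"
      by (rule local_to_global[OF Q h])
    have lC: "rvec l \<in> sigma chis x" and l0: "rvec l \<noteq> 0" and rl: "ratio Q c (rvec l) < 0"
      using h by (auto simp: neg_rel_min_at_def)
    have "ipair c l < 0" using ratio_neg_iff[OF Q l0, of c] rl by (simp add: pair_rvec)
    then have u: "unstable chis c x" using lC by (auto simp: unstable_def has_limit_iff)
    have "optimal chis Q c x l"
      unfolding optimal_def has_limit_iff using il lC glob by (auto simp: rvec_eq0)
    then have "lam chis Q c x = l" by (rule lam_eq[OF Q u])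
    then show "x \<in> Sstrat chis Q c l" using u by (simp add: Sstrat_def)
  qed
  have part2: "x \<in> Sstrat chis Q c l \<longleftrightarrow> Lstr (supp x) \<subseteq> Sstrat chis Q c l"
  proof
    assume hx: "x \<in> Sstrat chis Q c l"
    show "Lstr (supp x) \<subseteq> Sstrat chis Q c l"
    proof
      fix y assume "y \<in> Lstr (supp x)"
      then have sy: "supp y = supp x" by (simp add: Lstr_def)
      show "y \<in> Sstrat chis Q c l"
        using hx unstable_supp[OF sy, of chis c] lam_supp[OF sy, of chis Q c] by (simp add: Sstrat_def)
    qed
  next
    assume "Lstr (supp x) \<subseteq> Sstrat chis Q c l"
    then show "x \<in> Sstrat chis Q c l" by (auto simp: Lstr_def)
  qed
  show ?thesis using part1 part2 by blast
qed

end
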